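(* Let $G$ be a connected simple graph with $m$ edges and let $k\geq 2$ be an integer. Then $$\chi_{dom}(P_{k+1})\leq \chi_{dom}(G^{\frac{1}{k}})\leq (m-1)\chi_{dom}(P_k)+\chi_{dom}(P_{k+1}).$$
   Context: All graphs are finite and simple. A dominated coloring of a graph $H$ is a proper vertex coloring of $H$ such that for every color class $C$ there is a vertex $x\in V(H)$ adjacent to every vertex of $C$. The dominated chromatic number $\chi_{dom}(H)$ is the minimum number of colors in a dominated coloring of $H$. $P_n$ denotes the path on $n$ vertices. The $k$-subdivision $G^{\frac{1}{k}}$ of $G$ is the graph obtained by replacing each edge $v_iv_j$ of $G$ by a path of length $k$ (i.e. with $k-1$ new internal vertices) between $v_i$ and $v_j$, the internal vertices of distinct such paths being distinct; if $G$ has $n$ vertices and $m$ edges then $G^{\frac{1}{k}}$ has $n+(k-1)m$ vertices and $km$ edges. *)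

theory Defs
  imports Main
begin

definition simple_graph :: "'a set \<Rightarrow> 'a set set \<Rightarrow> bool" where
  "simple_graph V E \<longleftrightarrow> finite V \<and>
     (\<forall>e\<in>E. \<exists>u v. u \<in> V \<and> v \<in> V \<and> u \<noteq> v \<and> e = {u, v})"

definition connected_graph :: "'a set \<Rightarrow> 'a set set \<Rightarrow> bool" where
  "connected_graph V E \<longleftrightarrow> V \<noteq> {} \<and>
     (\<forall>u\<in>V. \<forall>v\<in>V. (\<lambda>x y. {x, y} \<in> E)\<^sup>*\<^sup>* u v)"

definition dominated_coloring :: "'a set \<Rightarrow> 'a set set \<Rightarrow> ('a \<Rightarrow> nat) \<Rightarrow> bool" where
  "dominated_coloring V E c \<longleftrightarrow>
     (\<forall>x\<in>V. \<forall>y\<in>V. {x, y} \<in> E \<longrightarrow> c x \<noteq> c y) \<and>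
     (\<forall>j \<in> c ` V. \<exists>x\<in>V. \<forall>y\<in>{v\<in>V. c v = j}. {x, y} \<in> E)"

definition chi_dom :: "'a set \<Rightarrow> 'a set set \<Rightarrow> nat" where
  "chi_dom V E = (LEAST n. \<exists>c. dominated_coloring V E c \<and> card (c ` V) = n)"

definition path_V :: "nat \<Rightarrow> nat set" where
  "path_V n = {0..<n}"

definition path_E :: "nat \<Rightarrow> nat set set" where
  "path_E n = {{i, Suc i} | i. Suc i < n}"

text \<open>k-subdivision. Each edge e is oriented by choosing one endpoint
 (end0 e); the other endpoint is end1 e. The path replacing e is
 end0 e = pos 0, Inr (e,1), ..., Inr (e,k-1), pos k = end1 e.\<close>

definition end0 :: "'a set \<Rightarrow> 'a" where
  "end0 e = (SOME u. u \<in> e)"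

definition end1 :: "'a set \<Rightarrow> 'a" where
  "end1 e = (SOME u. u \<in> e - {end0 e})"

definition sub_pos :: "nat \<Rightarrow> 'a set \<Rightarrow> nat \<Rightarrow> 'a + ('a set \<times> nat)" where
  "sub_pos k e i = (if i = 0 then Inl (end0 e) else if i = k then Inl (end1 e) else Inr (e, i))"

definition subdiv_V :: "nat \<Rightarrow> 'a set \<Rightarrow> 'a set set \<Rightarrow> ('a + ('a set \<times> nat)) set" where
  "subdiv_V k V E = Inl ` V \<union> {Inr (e, i) | e i. e \<in> E \<and> 1 \<le> i \<and> i < k}"

definition subdiv_E :: "nat \<Rightarrow> 'a set set \<Rightarrow> ('a + ('a set \<times> nat)) set set" where
  "subdiv_E k E = {{sub_pos k e i, sub_pos k e (Suc i)} | e i. e \<in> E \<and> i < k}"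

end

theory Submission imports Defs "HOL-Library.Nat_Bijection" begin

lemma path_E_iff: "{a,b} \<in> path_E n \<longleftrightarrow> (b = Suc a \<and> Suc a < n) \<or> (a = Suc b \<and> Suc b < n)"
  unfolding path_E_def by (auto simp: doubleton_eq_iff)

lemma path_dom_id: assumes "n \<ge> 2" shows "dominated_coloring (path_V n) (path_E n) id"
  unfolding dominated_coloring_def
proof (intro conjI ballI impI)
  fix x y assume "{x,y} \<in> path_E n" then show "id x \<noteq> id y" by (auto simp: path_E_iff)
next
  fix j assume "j \<in> id ` path_V n"
  then have j: "j < n" by (auto simp: path_V_def)
  show "\<exists>x\<in>path_V n. \<forall>y\<in>{v \<in> path_V n. id v = j}. {x, y} \<in> path_E n"
  proof (cases "Suc j < n")
    case True then show ?thesis by (intro bexI[of _ "Suc j"]) (auto simp: path_E_iff path_V_def)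
  next
    case False then show ?thesis using j assms by (intro bexI[of _ "j - 1"]) (auto simp: path_E_iff path_V_def)
  qed
qed

lemma chi_dom_le: "dominated_coloring V E c \<Longrightarrow> chi_dom V E \<le> card (c ` V)"
  unfolding chi_dom_def by (rule Least_le) blast

lemma chi_dom_ex: "dominated_coloring V E c0 \<Longrightarrow> \<exists>c. dominated_coloring V E c \<and> card (c ` V) = chi_dom V E"
  unfolding chi_dom_def by (rule LeastI_ex) blast

lemma edge_ends:
  assumes "simple_graph V E" "e \<in> E"
  shows "end0 e \<in> e" "end1 e \<in> e" "end0 e \<noteq> end1 e" "e = {end0 e, end1 e}" "end0 e \<in> V" "end1 e \<in> V" "e \<subseteq> V"
proof -
  obtain u v where uv: "u \<in> V" "v \<in> V" "u \<noteq> v" "e = {u,v}" using assms unfolding simple_graph_def by blast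
  have 0: "end0 e \<in> e" unfolding end0_def using uv by (metis insertI1 someI_ex)
  have 1: "end1 e \<in> e - {end0 e}" unfolding end1_def
    by (rule someI_ex) (use uv 0 in auto)
  show "end0 e \<in> e" "end1 e \<in> e" "end0 e \<noteq> end1 e" using 0 1 by auto
  show "e = {end0 e, end1 e}" using 0 1 uv by auto
  show "end0 e \<in> V" "end1 e \<in> V" "e \<subseteq> V" using 0 1 uv by auto
qed


definition goodp :: "'a set \<Rightarrow> 'a set set \<Rightarrow> 'a set \<Rightarrow> ('a \<Rightarrow> 'a set) \<Rightarrow> bool" where
  "goodp S E e0 p \<longleftrightarrow> (\<forall>v\<in>S. v \<in> p v \<and> p v \<in> E \<and> p v \<subseteq> S \<and> (v \<in> e0 \<longrightarrow> p v = e0)) \<and> inj_on p (S - e0)"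


context
  fixes V :: "'a set" and E :: "'a set set" and k :: nat
  assumes sg: "simple_graph V E" and k2: "k \<ge> 2"
begin

lemma pos0[simp]: "sub_pos k e 0 = Inl (end0 e)" by (simp add: sub_pos_def)
lemma posk[simp]: "sub_pos k e k = Inl (end1 e)" using k2 by (simp add: sub_pos_def)
lemma posI: "0 < i \<Longrightarrow> i < k \<Longrightarrow> sub_pos k e i = Inr (e, i)" by (simp add: sub_pos_def)

lemma pos_Inr: "sub_pos k e i = Inr (e', t) \<Longrightarrow> e' = e \<and> t = i \<and> 0 < i \<and> i \<noteq> k"
  by (auto simp: sub_pos_def split: if_splits)

lemma pos_Inl: "sub_pos k e i = Inl u \<Longrightarrow> (i = 0 \<and> u = end0 e) \<or> (i = k \<and> u = end1 e)"
  by (auto simp: sub_pos_def split: if_splits)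

lemma pos_in_V: "e \<in> E \<Longrightarrow> i \<le> k \<Longrightarrow> sub_pos k e i \<in> subdiv_V k V E"
  using edge_ends[OF sg] by (auto simp: sub_pos_def subdiv_V_def)

lemma pos_inj: assumes "e \<in> E" "i \<le> k" "j \<le> k" "sub_pos k e i = sub_pos k e j" shows "i = j"
proof -
  have ne: "end0 e \<noteq> end1 e" using edge_ends(3)[OF sg assms(1)] .
  show ?thesis
  proof (cases "0 < i \<and> i < k")
    case True
    then have "sub_pos k e j = Inr (e, i)" using assms(4) posI[of i e] by simp
    then show ?thesis using pos_Inr by blast
  next
    case False
    have "sub_pos k e i = Inl (if i = 0 then end0 e else end1 e)" using False assms(2) by (auto simp: sub_pos_def)
    then obtain u where u: "sub_pos k e i = Inl u" by blast
    then have "sub_pos k e j = Inl u" using assms(4) by simp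
    then show ?thesis using pos_Inl[OF u] pos_Inl[of e j u] ne by auto
  qed
qed

lemma V_cases: "x \<in> subdiv_V k V E \<Longrightarrow> (\<exists>v\<in>V. x = Inl v) \<or> (\<exists>e\<in>E. \<exists>i. 0 < i \<and> i < k \<and> x = Inr (e, i))"
  by (auto simp: subdiv_V_def)

lemma adj_iff: "{x,y} \<in> subdiv_E k E \<longleftrightarrow> (\<exists>e\<in>E. \<exists>i<k. (x = sub_pos k e i \<and> y = sub_pos k e (Suc i)) \<or> (y = sub_pos k e i \<and> x = sub_pos k e (Suc i)))"
  unfolding subdiv_E_def by (auto simp: doubleton_eq_iff)

lemma pos_adj: "e \<in> E \<Longrightarrow> a \<le> k \<Longrightarrow> b \<le> k \<Longrightarrow> a = Suc b \<or> b = Suc a \<Longrightarrow> {sub_pos k e a, sub_pos k e b} \<in> subdiv_E k E"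
proof -
  assume a: "e \<in> E" "a \<le> k" "b \<le> k" "a = Suc b \<or> b = Suc a"
  show ?thesis unfolding adj_iff
  proof (rule bexI[OF _ a(1)])
    from a(4) show "\<exists>i<k. sub_pos k e a = sub_pos k e i \<and> sub_pos k e b = sub_pos k e (Suc i) \<or>
          sub_pos k e b = sub_pos k e i \<and> sub_pos k e a = sub_pos k e (Suc i)"
    proof
      assume "a = Suc b" then show ?thesis using a(2) by (intro exI[of _ b]) auto
    next
      assume "b = Suc a" then show ?thesis using a(3) by (intro exI[of _ a]) auto
    qed
  qed
qed

lemma nbr_Inr: assumes "{Inr (e,t), y} \<in> subdiv_E k E"
  shows "e \<in> E \<and> 0 < t \<and> t < k \<and> (y = sub_pos k e (t - 1) \<or> y = sub_pos k e (Suc t))"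
proof -
  obtain e' i where ei: "e' \<in> E" "i < k" and
    c: "(Inr (e,t) = sub_pos k e' i \<and> y = sub_pos k e' (Suc i)) \<or> (y = sub_pos k e' i \<and> Inr (e,t) = sub_pos k e' (Suc i))"
    using assms unfolding adj_iff by blast
  from c show ?thesis
  proof
    assume h: "Inr (e,t) = sub_pos k e' i \<and> y = sub_pos k e' (Suc i)"
    then show ?thesis using pos_Inr[of e' i e t] ei by auto
  next
    assume h: "y = sub_pos k e' i \<and> Inr (e,t) = sub_pos k e' (Suc i)"
    then show ?thesis using pos_Inr[of e' "Suc i" e t] ei by auto
  qed
qed

lemma no_Inl_Inl: "{Inl u, Inl v} \<notin> subdiv_E k E"
proof
  assume "{Inl u, Inl v} \<in> subdiv_E k E"
  then obtain e i where "i < k" and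
    c: "(Inl u = sub_pos k e i \<and> Inl v = sub_pos k e (Suc i)) \<or> (Inl v = sub_pos k e i \<and> Inl u = sub_pos k e (Suc i))"
    unfolding adj_iff by blast
  then show False
  proof (elim disjE conjE)
    assume "Inl u = sub_pos k e i" "Inl v = sub_pos k e (Suc i)"
    then show False using k2 \<open>i < k\<close> pos_Inl[of e i u] pos_Inl[of e "Suc i" v] by auto
  next
    assume "Inl v = sub_pos k e i" "Inl u = sub_pos k e (Suc i)"
    then show False using k2 \<open>i < k\<close> pos_Inl[of e i v] pos_Inl[of e "Suc i" u] by auto
  qed
qed


lemma two_nbrs:
  assumes e0: "e0 \<in> E" and i: "i1 \<le> k" "i2 \<le> k" "i1 \<noteq> i2"
    and a1: "{x, sub_pos k e0 i1} \<in> subdiv_E k E" and a2: "{x, sub_pos k e0 i2} \<in> subdiv_E k E"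
  shows "\<exists>d\<le>k. x = sub_pos k e0 d"
proof (cases x)
  case (Inl u)
  have "\<not> (\<exists>w. sub_pos k e0 i1 = Inl w)"
  proof
    assume "\<exists>w. sub_pos k e0 i1 = Inl w"
    then obtain w where "sub_pos k e0 i1 = Inl w" by blast
    then show False using a1 no_Inl_Inl Inl by simp
  qed
  then have "0 < i1 \<and> i1 < k" using i(1) by (auto simp: sub_pos_def split: if_splits)
  then have "sub_pos k e0 i1 = Inr (e0, i1)" by (simp add: posI)
  then have "{Inr (e0, i1), x} \<in> subdiv_E k E" using a1 by (simp add: insert_commute)
  from nbr_Inr[OF this] show ?thesis
    by (metis Suc_leI diff_le_self le_trans less_imp_le)
next
  case (Inr et)
  then obtain e t where x: "x = Inr (e, t)" by (cases et) auto
  from nbr_Inr[of e t "sub_pos k e0 i1"] a1 x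
  have n1: "e \<in> E" "0 < t" "t < k" "sub_pos k e0 i1 = sub_pos k e (t - 1) \<or> sub_pos k e0 i1 = sub_pos k e (Suc t)"
    by auto
  from nbr_Inr[of e t "sub_pos k e0 i2"] a2 x
  have n2: "sub_pos k e0 i2 = sub_pos k e (t - 1) \<or> sub_pos k e0 i2 = sub_pos k e (Suc t)"
    by auto
  show ?thesis
  proof (cases "e = e0")
    case True then show ?thesis using x n1 by (intro exI[of _ t]) (simp add: posI)
  next
    case False
    have inl: "\<exists>w. sub_pos k e0 j = Inl w \<and> w \<in> e0"
      if "j \<le> k" "sub_pos k e0 j = sub_pos k e (t - 1) \<or> sub_pos k e0 j = sub_pos k e (Suc t)" for j
    proof (cases "0 < j \<and> j < k")
      case True
      then have "sub_pos k e0 j = Inr (e0, j)" by (simp add: posI)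
      then show ?thesis using that(2) pos_Inr False by metis
    next
      case False
      then have "j = 0 \<or> j = k" using that(1) by auto
      then show ?thesis using edge_ends[OF sg e0] by auto
    qed
    have d: "sub_pos k e0 i1 \<noteq> sub_pos k e0 i2" using pos_inj[OF e0 i(1,2)] i(3) by blast
    have both: "\<exists>w. sub_pos k e (t - 1) = Inl w \<and> w \<in> e0" "\<exists>w. sub_pos k e (Suc t) = Inl w \<and> w \<in> e0"
      using inl[OF i(1) n1(4)] inl[OF i(2) n2] d n1(4) n2 by metis+
    obtain w1 where w1: "sub_pos k e (t - 1) = Inl w1" "w1 \<in> e0" using both(1) by blast
    obtain w2 where w2: "sub_pos k e (Suc t) = Inl w2" "w2 \<in> e0" using both(2) by blast
    have "w1 = end0 e" using pos_Inl[OF w1(1)] n1 by auto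
    moreover have "w2 = end1 e" using pos_Inl[OF w2(1)] by auto
    ultimately have "{end0 e, end1 e} \<subseteq> e0" using w1 w2 by simp
    then have "e \<subseteq> e0" using edge_ends(4)[OF sg n1(1)] by simp
    moreover have "card e = 2" "card e0 = 2"
      using edge_ends(3,4)[OF sg n1(1)] edge_ends(3,4)[OF sg e0] by (metis card_2_iff)+
    ultimately have "e = e0" by (metis card_subset_eq finite.emptyI finite_insert edge_ends(4)[OF sg e0])
    then show ?thesis using False by blast
  qed
qed

lemma path_adj_back:
  assumes e0: "e0 \<in> E" and di: "d \<le> k" "i \<le> k" and a: "{sub_pos k e0 d, sub_pos k e0 i} \<in> subdiv_E k E"
  shows "{d, i} \<in> path_E (k + 1)"
proof (cases "0 < d \<and> d < k")
  case True
  then have "{Inr (e0, d), sub_pos k e0 i} \<in> subdiv_E k E" using a by (simp add: posI)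
  from nbr_Inr[OF this] have "sub_pos k e0 i = sub_pos k e0 (d - 1) \<or> sub_pos k e0 i = sub_pos k e0 (Suc d)" by blast
  then have "i = d - 1 \<or> i = Suc d" using pos_inj[OF e0 di(2)] True by auto
  then show ?thesis using True di by (auto simp: path_E_iff)
next
  case False
  show ?thesis
  proof (cases "0 < i \<and> i < k")
    case True
    then have "{Inr (e0, i), sub_pos k e0 d} \<in> subdiv_E k E" using a by (simp add: posI insert_commute)
    from nbr_Inr[OF this] have "sub_pos k e0 d = sub_pos k e0 (i - 1) \<or> sub_pos k e0 d = sub_pos k e0 (Suc i)" by blast
    then have "d = i - 1 \<or> d = Suc i" using pos_inj[OF e0 di(1)] True by auto
    then show ?thesis using True di by (auto simp: path_E_iff)
  next
    case False2: False
    have "d = 0 \<or> d = k" "i = 0 \<or> i = k" using False False2 di by auto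
    then have "\<exists>u v. sub_pos k e0 d = Inl u \<and> sub_pos k e0 i = Inl v" by auto
    then show ?thesis using a no_Inl_Inl by auto
  qed
qed


lemma finite_E: "finite E"
proof -
  have "E \<subseteq> Pow V" using edge_ends(7)[OF sg] by blast
  moreover have "finite V" using sg unfolding simple_graph_def by blast
  ultimately show ?thesis using finite_subset by blast
qed

lemma finite_subdiv_V: "finite (subdiv_V k V E)"
proof -
  have h1: "{Inr (e, i) | e i. e \<in> E \<and> 1 \<le> i \<and> i < k} \<subseteq> (\<lambda>(e, i). Inr (e, i)) ` (E \<times> {..<k})" by auto
  have h2: "finite ((\<lambda>(e, i). Inr (e, i)) ` (E \<times> {..<k}))" using finite_E by simp
  have h3: "finite {Inr (e, i) | e i. e \<in> E \<and> 1 \<le> i \<and> i < k}" using finite_subset[OF h1 h2] .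
  have "finite V" using sg unfolding simple_graph_def by blast
  then show ?thesis unfolding subdiv_V_def using h3 by simp
qed

lemma lower:
  assumes e0: "e0 \<in> E" and dc: "dominated_coloring (subdiv_V k V E) (subdiv_E k E) c"
  shows "chi_dom (path_V (k + 1)) (path_E (k + 1)) \<le> card (c ` subdiv_V k V E)"
proof -
  define c' where "c' i = c (sub_pos k e0 i)" for i
  have pV: "\<And>i. i \<in> path_V (k + 1) \<longleftrightarrow> i \<le> k" by (auto simp: path_V_def)
  have inV: "\<And>i. i \<le> k \<Longrightarrow> sub_pos k e0 i \<in> subdiv_V k V E" using pos_in_V[OF e0] .
  have prp: "\<And>x y. x \<in> subdiv_V k V E \<Longrightarrow> y \<in> subdiv_V k V E \<Longrightarrow> {x, y} \<in> subdiv_E k E \<Longrightarrow> c x \<noteq> c y"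
    using dc unfolding dominated_coloring_def by blast
  have dom: "\<And>j. j \<in> c ` subdiv_V k V E \<Longrightarrow> \<exists>x\<in>subdiv_V k V E. \<forall>y\<in>{v \<in> subdiv_V k V E. c v = j}. {x, y} \<in> subdiv_E k E"
    using dc unfolding dominated_coloring_def by blast
  have "dominated_coloring (path_V (k + 1)) (path_E (k + 1)) c'"
    unfolding dominated_coloring_def
  proof (intro conjI ballI impI)
    fix x y assume xy: "x \<in> path_V (k + 1)" "y \<in> path_V (k + 1)" "{x, y} \<in> path_E (k + 1)"
    then have "{sub_pos k e0 x, sub_pos k e0 y} \<in> subdiv_E k E"
      by (intro pos_adj[OF e0]) (auto simp: pV path_E_iff)
    then show "c' x \<noteq> c' y" unfolding c'_def using prp inV xy pV by blast
  next
    fix j assume j: "j \<in> c' ` path_V (k + 1)"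
    then obtain i0 where i0: "i0 \<le> k" "c' i0 = j" using pV by auto
    show "\<exists>x\<in>path_V (k + 1). \<forall>y\<in>{v \<in> path_V (k + 1). c' v = j}. {x, y} \<in> path_E (k + 1)"
    proof (cases "\<exists>i1. i1 \<le> k \<and> c' i1 = j \<and> i1 \<noteq> i0")
      case True
      then obtain i1 where i1: "i1 \<le> k" "c' i1 = j" "i1 \<noteq> i0" by blast
      have "j \<in> c ` subdiv_V k V E" using i0 inV unfolding c'_def by blast
      from dom[OF this] obtain x where x: "x \<in> subdiv_V k V E"
        "\<And>y. y \<in> subdiv_V k V E \<Longrightarrow> c y = j \<Longrightarrow> {x, y} \<in> subdiv_E k E" by blast
      have a0: "{x, sub_pos k e0 i0} \<in> subdiv_E k E" using x(2) inV i0 unfolding c'_def by blast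
      have a1: "{x, sub_pos k e0 i1} \<in> subdiv_E k E" using x(2) inV i1 unfolding c'_def by blast
      obtain d where d: "d \<le> k" "x = sub_pos k e0 d" using two_nbrs[OF e0 i0(1) i1(1) i1(3)[symmetric] a0 a1] by blast
      show ?thesis
      proof (rule bexI[of _ d])
        show "d \<in> path_V (k + 1)" using d pV by blast
        show "\<forall>y\<in>{v \<in> path_V (k + 1). c' v = j}. {d, y} \<in> path_E (k + 1)"
        proof
          fix y assume "y \<in> {v \<in> path_V (k + 1). c' v = j}"
          then have y: "y \<le> k" "c (sub_pos k e0 y) = j" using pV unfolding c'_def by auto
          have "{sub_pos k e0 d, sub_pos k e0 y} \<in> subdiv_E k E" using x(2)[OF inV[OF y(1)] y(2)] d by simp
          then show "{d, y} \<in> path_E (k + 1)" using path_adj_back[OF e0 d(1) y(1)] by blast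
        qed
      qed
    next
      case False
      then have K: "\<And>y. y \<in> path_V (k + 1) \<Longrightarrow> c' y = j \<Longrightarrow> y = i0" using pV by blast
      show ?thesis
      proof (cases "i0 < k")
        case True
        show ?thesis using K True k2 by (intro bexI[of _ "Suc i0"]) (auto simp: path_V_def path_E_iff)
      next
        case False
        show ?thesis using K False k2 i0 by (intro bexI[of _ "i0 - 1"]) (auto simp: path_V_def path_E_iff)
      qed
    qed
  qed
  then have "chi_dom (path_V (k + 1)) (path_E (k + 1)) \<le> card (c' ` path_V (k + 1))" by (rule chi_dom_le)
  also have "\<dots> \<le> card (c ` subdiv_V k V E)"
    by (rule card_mono) (use finite_subdiv_V inV pV in \<open>auto simp: c'_def\<close>)
  finally show ?thesis .
qed


lemma upper:
  assumes e0: "e0 \<in> E" and gp: "goodp V E e0 p"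
    and cA: "dominated_coloring (path_V k) (path_E k) cA"
    and cB: "dominated_coloring (path_V (k + 1)) (path_E (k + 1)) cB"
  shows "\<exists>c. dominated_coloring (subdiv_V k V E) (subdiv_E k E) c \<and>
     card (c ` subdiv_V k V E) \<le> (card E - 1) * card (cA ` path_V k) + card (cB ` path_V (k + 1))"
proof -
  have p1: "\<And>v. v \<in> V \<Longrightarrow> v \<in> p v \<and> p v \<in> E \<and> (v \<in> e0 \<longrightarrow> p v = e0)"
    and p2: "inj_on p (V - e0)" using gp unfolding goodp_def by auto
  obtain g :: "'a set \<Rightarrow> nat" and nn where g: "inj_on g E" using finite_imp_inj_to_nat_seg[OF finite_E] by blast
  define hm where "hm x = (case x of Inl v \<Rightarrow> p v | Inr (e, i) \<Rightarrow> e)" for x :: "'a + ('a set \<times> nat)"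
  define ps where "ps x = (case x of Inl v \<Rightarrow> if v = end0 (p v) then 0 else k | Inr (e, i) \<Rightarrow> i)" for x :: "'a + ('a set \<times> nat)"
  define oo where "oo e = (if p (end0 e) = e then 0 else 1 :: nat)" for e
  define col where "col e i = (if e = e0 then cB i else cA (i - oo e))" for e i
  define c where "c x = prod_encode (g (hm x), col (hm x) (ps x))" for x
  let ?V' = "subdiv_V k V E" and ?E' = "subdiv_E k E"
  have F1: "hm x \<in> E \<and> ps x \<le> k \<and> sub_pos k (hm x) (ps x) = x" if x: "x \<in> ?V'" for x
  proof -
    from V_cases[OF x] show ?thesis
    proof
      assume "\<exists>v\<in>V. x = Inl v"
      then obtain v where v: "v \<in> V" "x = Inl v" by blast
      have pv: "p v \<in> E" "v \<in> p v" using p1[OF v(1)] by auto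
      have "v = end0 (p v) \<or> v = end1 (p v)" using edge_ends(4)[OF sg pv(1)] pv(2) by blast
      then show ?thesis using v pv unfolding hm_def ps_def by auto
    next
      assume "\<exists>e\<in>E. \<exists>i. 0 < i \<and> i < k \<and> x = Inr (e, i)"
      then obtain e i where "e \<in> E" "0 < i" "i < k" "x = Inr (e, i)" by blast
      then show ?thesis unfolding hm_def ps_def by (simp add: posI)
    qed
  qed
  have F3: "hm (sub_pos k e i) = e \<and> ps (sub_pos k e i) = i" if "0 < i" "i < k" for e i
    using that unfolding hm_def ps_def by (simp add: posI)
  have F2: "ps (sub_pos k e i) = i" if "e \<in> E" "i \<le> k" "hm (sub_pos k e i) = e" for e i
  proof (cases "0 < i \<and> i < k")
    case True then show ?thesis using F3 by blast
  next
    case False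
    then have "i = 0 \<or> i = k" using that(2) by auto
    moreover have "end0 e \<noteq> end1 e" using edge_ends(3)[OF sg that(1)] .
    ultimately show ?thesis using that(3) unfolding hm_def ps_def by auto
  qed
  have F4: "hm (sub_pos k e0 i) = e0" if "i \<le> k" for i
  proof (cases "0 < i \<and> i < k")
    case True then show ?thesis using F3 by blast
  next
    case False
    then have "i = 0 \<or> i = k" using that by auto
    then show ?thesis unfolding hm_def using p1 edge_ends[OF sg e0] by auto
  qed
  have F5: "oo (hm x) \<le> ps x \<and> ps x - oo (hm x) < k" if x: "x \<in> ?V'" "hm x \<noteq> e0" for x
  proof -
    have oo1: "oo e \<le> 1" for e unfolding oo_def by simp
    from V_cases[OF x(1)] show ?thesis
    proof
      assume "\<exists>v\<in>V. x = Inl v"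
      then obtain v where v: "v \<in> V" "x = Inl v" by blast
      define e where "e = p v"
      have pv: "e \<in> E" "v \<in> e" "e \<noteq> e0" using p1[OF v(1)] x(2) v(2) unfolding e_def hm_def by auto
      have ve0: "v \<notin> e0" using p1[OF v(1)] pv(3) unfolding e_def by auto
      show ?thesis
      proof (cases "v = end0 e")
        case True
        then have "oo e = 0" unfolding oo_def e_def by simp
        then show ?thesis using True v k2 unfolding hm_def ps_def e_def by simp
      next
        case False
        have "p (end0 e) \<noteq> e"
        proof
          assume h: "p (end0 e) = e"
          have eV: "end0 e \<in> V" using edge_ends(5)[OF sg pv(1)] .
          have "end0 e \<notin> e0" using p1[OF eV] h pv(3) by auto
          then have "end0 e = v" using p2 h v(1) ve0 eV unfolding e_def inj_on_def by blast
          then show False using False by simp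
        qed
        then have "oo e = 1" unfolding oo_def by simp
        then show ?thesis using False v k2 unfolding hm_def ps_def e_def by simp
      qed
    next
      assume "\<exists>e\<in>E. \<exists>i. 0 < i \<and> i < k \<and> x = Inr (e, i)"
      then obtain e i where "e \<in> E" "0 < i" "i < k" "x = Inr (e, i)" by blast
      then show ?thesis using oo1[of e] unfolding hm_def ps_def by simp
    qed
  qed
  have cinj: "c x = c y \<Longrightarrow> x \<in> ?V' \<Longrightarrow> y \<in> ?V' \<Longrightarrow> hm x = hm y \<and> col (hm x) (ps x) = col (hm y) (ps y)" for x y
  proof -
    assume h: "c x = c y" "x \<in> ?V'" "y \<in> ?V'"
    then have "(g (hm x), col (hm x) (ps x)) = (g (hm y), col (hm y) (ps y))"
      unfolding c_def using inj_prod_encode[of UNIV] by (simp add: inj_on_def)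
    moreover have "hm x \<in> E" "hm y \<in> E" using F1 h by auto
    ultimately show ?thesis using g unfolding inj_on_def by auto
  qed
  have pAprop: "\<And>x y. x \<in> path_V k \<Longrightarrow> y \<in> path_V k \<Longrightarrow> {x, y} \<in> path_E k \<Longrightarrow> cA x \<noteq> cA y"
    and pAdom: "\<And>j. j \<in> cA ` path_V k \<Longrightarrow> \<exists>x\<in>path_V k. \<forall>y\<in>{v \<in> path_V k. cA v = j}. {x, y} \<in> path_E k"
    using cA unfolding dominated_coloring_def by blast+
  have pBprop: "\<And>x y. x \<in> path_V (k+1) \<Longrightarrow> y \<in> path_V (k+1) \<Longrightarrow> {x, y} \<in> path_E (k+1) \<Longrightarrow> cB x \<noteq> cB y"
    and pBdom: "\<And>j. j \<in> cB ` path_V (k+1) \<Longrightarrow> \<exists>x\<in>path_V (k+1). \<forall>y\<in>{v \<in> path_V (k+1). cB v = j}. {x, y} \<in> path_E (k+1)"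
    using cB unfolding dominated_coloring_def by blast+
  have aux: "c (sub_pos k e i) \<noteq> c (sub_pos k e (Suc i))" if ei: "e \<in> E" "i < k" for e i
  proof
    assume ceq: "c (sub_pos k e i) = c (sub_pos k e (Suc i))"
    have xV: "sub_pos k e i \<in> ?V'" "sub_pos k e (Suc i) \<in> ?V'" using pos_in_V ei by auto
    from cinj[OF ceq xV] have eq: "hm (sub_pos k e i) = hm (sub_pos k e (Suc i))"
      "col (hm (sub_pos k e i)) (ps (sub_pos k e i)) = col (hm (sub_pos k e (Suc i))) (ps (sub_pos k e (Suc i)))" by auto
    have he: "hm (sub_pos k e i) = e \<and> hm (sub_pos k e (Suc i)) = e"
    proof (cases "i = 0")
      case True then show ?thesis using F3[of 1 e] k2 eq(1) by auto
    next
      case False then show ?thesis using F3[of i e] ei eq(1) by auto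
    qed
    have psx: "ps (sub_pos k e i) = i" "ps (sub_pos k e (Suc i)) = Suc i" using F2 ei he by auto
    have ceq2: "col e i = col e (Suc i)" using eq(2) he psx by simp
    show False
    proof (cases "e = e0")
      case True
      then have "cB i = cB (Suc i)" using ceq2 unfolding col_def by simp
      moreover have "{i, Suc i} \<in> path_E (k + 1)" using ei by (simp add: path_E_iff)
      ultimately show False using pBprop ei by (auto simp: path_V_def)
    next
      case False
      have f1: "oo e \<le> i" using F5[OF xV(1)] he False psx by auto
      have f2: "Suc i - oo e < k" using F5[OF xV(2)] he False psx by auto
      have "cA (i - oo e) = cA (Suc (i - oo e))" using ceq2 False f1 unfolding col_def by (simp add: Suc_diff_le)
      moreover have "{i - oo e, Suc (i - oo e)} \<in> path_E k" using f1 f2 by (simp add: path_E_iff Suc_diff_le)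
      ultimately show False using pAprop f1 f2 by (auto simp: path_V_def Suc_diff_le)
    qed
  qed
  have dc: "dominated_coloring ?V' ?E' c"
    unfolding dominated_coloring_def
  proof (intro conjI ballI impI)
    fix x y assume xy: "x \<in> ?V'" "y \<in> ?V'" "{x, y} \<in> ?E'"
    then obtain e i where "e \<in> E" "i < k"
      "(x = sub_pos k e i \<and> y = sub_pos k e (Suc i)) \<or> (y = sub_pos k e i \<and> x = sub_pos k e (Suc i))"
      unfolding adj_iff by blast
    then show "c x \<noteq> c y" using aux by metis
  next
    fix j assume "j \<in> c ` ?V'"
    then obtain x0 where x0: "x0 \<in> ?V'" "j = c x0" by blast
    define e' where "e' = hm x0"
    have mem: "hm y = e' \<and> col e' (ps y) = col e' (ps x0)" if "y \<in> ?V'" "c y = j" for y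
      using cinj[of y x0] that x0 unfolding e'_def by auto
    have e'E: "e' \<in> E" using F1[OF x0(1)] unfolding e'_def by blast
    show "\<exists>x\<in>?V'. \<forall>y\<in>{v \<in> ?V'. c v = j}. {x, y} \<in> ?E'"
    proof (cases "e' = e0")
      case True
      have "cB (ps x0) \<in> cB ` path_V (k + 1)" using F1[OF x0(1)] by (auto simp: path_V_def)
      from pBdom[OF this] obtain d where d0: "d \<in> path_V (k+1)"
        and dd: "\<forall>y\<in>{v \<in> path_V (k+1). cB v = cB (ps x0)}. {d, y} \<in> path_E (k+1)" by blast
      have d: "d \<le> k" "\<And>i. i \<le> k \<Longrightarrow> cB i = cB (ps x0) \<Longrightarrow> {d, i} \<in> path_E (k + 1)"
        using d0 dd by (auto simp: path_V_def)
      show ?thesis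
      proof (rule bexI[of _ "sub_pos k e0 d"])
        show "sub_pos k e0 d \<in> ?V'" using pos_in_V[OF e0 d(1)] .
        show "\<forall>y\<in>{v \<in> ?V'. c v = j}. {sub_pos k e0 d, y} \<in> ?E'"
        proof
          fix y assume "y \<in> {v \<in> ?V'. c v = j}"
          then have y: "y \<in> ?V'" "c y = j" by auto
          have m: "hm y = e0" "cB (ps y) = cB (ps x0)" using mem[OF y] True unfolding col_def by auto
          have fy: "ps y \<le> k" "sub_pos k e0 (ps y) = y" using F1[OF y(1)] m(1) by auto
          have "{d, ps y} \<in> path_E (k + 1)" using d(2)[OF fy(1) m(2)] .
          then have "{sub_pos k e0 d, sub_pos k e0 (ps y)} \<in> ?E'"
            by (intro pos_adj[OF e0 d(1) fy(1)]) (auto simp: path_E_iff)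
          then show "{sub_pos k e0 d, y} \<in> ?E'" using fy(2) by simp
        qed
      qed
    next
      case False
      have f0: "oo e' \<le> ps x0" "ps x0 - oo e' < k" using F5[OF x0(1)] False unfolding e'_def by auto
      have "cA (ps x0 - oo e') \<in> cA ` path_V k" using f0 by (auto simp: path_V_def)
      from pAdom[OF this] obtain d where d: "d < k"
        "\<And>i. i < k \<Longrightarrow> cA i = cA (ps x0 - oo e') \<Longrightarrow> {d, i} \<in> path_E k" by (auto simp: path_V_def)
      have oo1: "oo e' \<le> 1" unfolding oo_def by simp
      have dk: "d + oo e' \<le> k" using d(1) oo1 by linarith
      show ?thesis
      proof (rule bexI[of _ "sub_pos k e' (d + oo e')"])
        show "sub_pos k e' (d + oo e') \<in> ?V'" using pos_in_V[OF e'E dk] .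
        show "\<forall>y\<in>{v \<in> ?V'. c v = j}. {sub_pos k e' (d + oo e'), y} \<in> ?E'"
        proof
          fix y assume "y \<in> {v \<in> ?V'. c v = j}"
          then have y: "y \<in> ?V'" "c y = j" by auto
          have m: "hm y = e'" "cA (ps y - oo e') = cA (ps x0 - oo e')" using mem[OF y] False unfolding col_def by auto
          have fy: "ps y \<le> k" "sub_pos k e' (ps y) = y" using F1[OF y(1)] m(1) by auto
          have f5: "oo e' \<le> ps y" "ps y - oo e' < k" using F5[OF y(1)] m(1) False by auto
          have "{d, ps y - oo e'} \<in> path_E k" using d(2)[OF f5(2) m(2)] .
          then have "d + oo e' = Suc (ps y) \<or> ps y = Suc (d + oo e')" using f5(1) by (auto simp: path_E_iff)
          then have "{sub_pos k e' (d + oo e'), sub_pos k e' (ps y)} \<in> ?E'"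
            by (intro pos_adj[OF e'E dk fy(1)])
          then show "{sub_pos k e' (d + oo e'), y} \<in> ?E'" using fy(2) by simp
        qed
      qed
    qed
  qed
  define A0 where "A0 = Pair (g e0) ` (cB ` path_V (k + 1))"
  define A1 where "A1 = (\<Union>e\<in>E - {e0}. Pair (g e) ` (cA ` path_V k))"
  have sub: "c ` ?V' \<subseteq> prod_encode ` (A0 \<union> A1)"
  proof
    fix z assume "z \<in> c ` ?V'"
    then obtain x where x: "x \<in> ?V'" "z = c x" by blast
    have f1: "hm x \<in> E" "ps x \<le> k" using F1[OF x(1)] by auto
    show "z \<in> prod_encode ` (A0 \<union> A1)"
    proof (cases "hm x = e0")
      case True
      then have "(g (hm x), col (hm x) (ps x)) \<in> A0" unfolding A0_def col_def using f1 by (auto simp: path_V_def)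
      then show ?thesis using x(2) unfolding c_def by blast
    next
      case False
      have "(g (hm x), col (hm x) (ps x)) \<in> Pair (g (hm x)) ` (cA ` path_V k)"
        unfolding col_def using False F5[OF x(1) False] by (auto simp: path_V_def)
      moreover have "hm x \<in> E - {e0}" using f1 False by blast
      ultimately have "(g (hm x), col (hm x) (ps x)) \<in> A1" unfolding A1_def by blast
      then show ?thesis using x(2) unfolding c_def by blast
    qed
  qed
  have finA: "finite (cA ` path_V k)" "finite (cB ` path_V (k + 1))" by (auto simp: path_V_def)
  have "card (c ` ?V') \<le> card (prod_encode ` (A0 \<union> A1))"
    by (rule card_mono[OF _ sub]) (use finA finite_E in \<open>simp add: A0_def A1_def\<close>)
  also have "\<dots> \<le> card (A0 \<union> A1)" by (rule card_image_le) (use finA finite_E in \<open>simp add: A0_def A1_def\<close>)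
  also have "\<dots> \<le> card A0 + card A1" by (rule card_Un_le)
  also have "card A0 \<le> card (cB ` path_V (k + 1))" unfolding A0_def by (rule card_image_le[OF finA(2)])
  also have "card A1 \<le> (\<Sum>e\<in>E - {e0}. card (Pair (g e) ` (cA ` path_V k)))" unfolding A1_def
    by (rule card_UN_le) (use finite_E in simp)
  also have "\<dots> \<le> (\<Sum>e\<in>E - {e0}. card (cA ` path_V k))" by (rule sum_mono) (rule card_image_le[OF finA(1)])
  also have "\<dots> = (card E - 1) * card (cA ` path_V k)" using e0 finite_E by simp
  finally show ?thesis using dc by (intro exI[of _ c]) linarith
qed


end


lemma crossing:
  assumes "(\<lambda>x y. {x, y} \<in> E)\<^sup>*\<^sup>* u v" "u \<in> S" "v \<notin> S"
  shows "\<exists>x y. x \<in> S \<and> y \<notin> S \<and> {x, y} \<in> E"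
  using assms
proof (induction rule: rtranclp_induct)
  case base then show ?case by simp
next
  case (step y z)
  show ?case
  proof (cases "y \<in> S")
    case True then show ?thesis using step(2,5) by blast
  next
    case False then show ?thesis using step(3,4) by blast
  qed
qed

lemma grow:
  assumes sg: "simple_graph V E" and con: "connected_graph V E"
    and S: "S \<subseteq> V" "e0 \<subseteq> S" "S \<noteq> V" "u \<in> S" and g: "goodp S E e0 p"
  shows "\<exists>y p'. y \<in> V - S \<and> goodp (insert y S) E e0 p'"
proof -
  obtain v where v: "v \<in> V" "v \<notin> S" using S by blast
  have uV: "u \<in> V" using S by blast
  have "(\<lambda>x y. {x, y} \<in> E)\<^sup>*\<^sup>* u v" using con uV v(1) unfolding connected_graph_def by simp
  from crossing[OF this S(4) v(2)] obtain x y where xy: "x \<in> S" "y \<notin> S" "{x, y} \<in> E" by blast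
  have yV: "y \<in> V" using edge_ends(7)[OF sg xy(3)] by blast
  have ye0: "y \<notin> e0" using xy S by blast
  define p' where "p' = p(y := {x, y})"
  have g1: "\<And>v. v \<in> S \<Longrightarrow> v \<in> p v \<and> p v \<in> E \<and> p v \<subseteq> S \<and> (v \<in> e0 \<longrightarrow> p v = e0)"
    and g2: "inj_on p (S - e0)" using g unfolding goodp_def by auto
  have h1: "\<forall>w\<in>insert y S. w \<in> p' w \<and> p' w \<in> E \<and> p' w \<subseteq> insert y S \<and> (w \<in> e0 \<longrightarrow> p' w = e0)"
  proof
    fix w assume w: "w \<in> insert y S"
    show "w \<in> p' w \<and> p' w \<in> E \<and> p' w \<subseteq> insert y S \<and> (w \<in> e0 \<longrightarrow> p' w = e0)"
    proof (cases "w = y")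
      case True then show ?thesis using xy ye0 unfolding p'_def by simp
    next
      case False
      then have "w \<in> S" "p' w = p w" using w unfolding p'_def by auto
      then show ?thesis using g1[of w] by auto
    qed
  qed
  have h2: "inj_on p' (insert y S - e0)"
  proof -
    have "inj_on p (S - e0)" using g2 .
    moreover have "{x, y} \<notin> p ` (S - e0)"
    proof
      assume "{x, y} \<in> p ` (S - e0)"
      then obtain w where w: "w \<in> S" "p w = {x, y}" by blast
      have "p w \<subseteq> S" using g1[OF w(1)] by simp
      then show False using w(2) xy(2) by blast
    qed
    moreover have eq: "\<And>w. w \<in> S - e0 \<Longrightarrow> p' w = p w" unfolding p'_def using xy(2) by auto
    moreover have "p' ` (S - e0) = p ` (S - e0)" using eq by (rule image_cong[OF refl])
    moreover have "inj_on p' (S - e0) = inj_on p (S - e0)" using eq by (rule inj_on_cong)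
    moreover have "p' y = {x, y}" unfolding p'_def by simp
    moreover have "S - e0 - {y} = S - e0" using xy(2) by blast
    ultimately have "inj_on p' (insert y (S - e0))" by (simp add: inj_on_insert)
    moreover have "insert y S - e0 = insert y (S - e0)" using ye0 by blast
    ultimately show "inj_on p' (insert y S - e0)" by simp
  qed
  have "goodp (insert y S) E e0 p'" unfolding goodp_def using h1 h2 by (intro conjI)
  moreover have "y \<in> V - S" using yV xy by blast
  ultimately show ?thesis by blast
qed

lemma tree_assign:
  assumes sg: "simple_graph V E" and con: "connected_graph V E" and e0: "e0 \<in> E"
  shows "\<exists>p. goodp V E e0 p"
proof -
  have e0V: "e0 \<subseteq> V" using edge_ends(7)[OF sg e0] .
  obtain u where u: "u \<in> e0" using edge_ends(1)[OF sg e0] by blast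
  have fin: "finite V" using sg unfolding simple_graph_def by blast
  have main: "\<And>S p. S \<subseteq> V \<Longrightarrow> e0 \<subseteq> S \<Longrightarrow> goodp S E e0 p \<Longrightarrow> \<exists>p. goodp V E e0 p"
  proof -
    fix S p
    show "S \<subseteq> V \<Longrightarrow> e0 \<subseteq> S \<Longrightarrow> goodp S E e0 p \<Longrightarrow> \<exists>p. goodp V E e0 p"
    proof (induction "card (V - S)" arbitrary: S p rule: less_induct)
      case less
      show ?case
      proof (cases "S = V")
        case True then show ?thesis using less by blast
      next
        case False
        then obtain y p' where yp: "y \<in> V - S" "goodp (insert y S) E e0 p'"
          using grow[OF sg con less(2,3) False _ less(4)] u less(3) by blast
        have "card (V - insert y S) < card (V - S)"
          using yp(1) fin by (metis Diff_insert card_Diff1_less finite_Diff)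
        then show ?thesis using less(1)[OF _ _ _ yp(2)] yp(1) less(2,3) by blast
      qed
    qed
  qed
  have "goodp e0 E e0 (\<lambda>_. e0)" unfolding goodp_def using e0 by auto
  then show ?thesis using main[OF e0V subset_refl] by blast
qed


theorem theorem4p2:
  fixes V :: "'a set" and E :: "'a set set" and k m :: nat
  assumes "simple_graph V E" and "connected_graph V E"
    and "E \<noteq> {}"
    and "m = card E"
    and "k \<ge> 2"
  shows "chi_dom (path_V (k+1)) (path_E (k+1)) \<le> chi_dom (subdiv_V k V E) (subdiv_E k E)
       \<and> chi_dom (subdiv_V k V E) (subdiv_E k E)
           \<le> (m - 1) * chi_dom (path_V k) (path_E k) + chi_dom (path_V (k+1)) (path_E (k+1))"
proof -
  note sg = assms(1) and k2 = assms(5)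
  obtain e0 where e0: "e0 \<in> E" using assms(3) by blast
  obtain p where gp: "goodp V E e0 p" using tree_assign[OF sg assms(2) e0] by blast
  obtain cA where cA: "dominated_coloring (path_V k) (path_E k) cA" "card (cA ` path_V k) = chi_dom (path_V k) (path_E k)"
    using chi_dom_ex[OF path_dom_id[OF k2]] by blast
  have k21: "k + 1 \<ge> 2" using k2 by simp
  obtain cB where cB: "dominated_coloring (path_V (k+1)) (path_E (k+1)) cB" "card (cB ` path_V (k+1)) = chi_dom (path_V (k+1)) (path_E (k+1))"
    using chi_dom_ex[OF path_dom_id[OF k21]] by blast
  obtain c where c: "dominated_coloring (subdiv_V k V E) (subdiv_E k E) c"
    "card (c ` subdiv_V k V E) \<le> (card E - 1) * card (cA ` path_V k) + card (cB ` path_V (k + 1))"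
    using upper[OF sg k2 e0 gp cA(1) cB(1)] by blast
  have up: "chi_dom (subdiv_V k V E) (subdiv_E k E) \<le> (m - 1) * chi_dom (path_V k) (path_E k) + chi_dom (path_V (k+1)) (path_E (k+1))"
    using chi_dom_le[OF c(1)] c(2) cA(2) cB(2) assms(4) by simp
  obtain cs where cs: "dominated_coloring (subdiv_V k V E) (subdiv_E k E) cs" "card (cs ` subdiv_V k V E) = chi_dom (subdiv_V k V E) (subdiv_E k E)"
    using chi_dom_ex[OF c(1)] by blast
  have lo: "chi_dom (path_V (k+1)) (path_E (k+1)) \<le> chi_dom (subdiv_V k V E) (subdiv_E k E)"
    using lower[OF sg k2 e0 cs(1)] cs(2) by simp
  show ?thesis using up lo by blast
qed

end
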